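(* Let $H\in(0,1)$, $d\geq2$ an integer and $T>0$. For $s,t,u,v\ge0$ set $\lambda=s^{2H}+t^{2H}$, $\rho=u^{2H}+v^{2H}$ and \[ \mu=\tfrac{1}{2}\left(s^{2H}+t^{2H}+u^{2H}+v^{2H}-|t-v|^{2H}-|s-u|^{2H}\right). \] Let \[ A_{T}=\int_{[0,T]^{4}}(\lambda\rho-\mu^{2})^{-d/2}\,ds\,dt\,du\,dv . \] Then $A_{T}<+\infty$ if and only if $Hd<2$.
   Context: Here $\lambda\rho-\mu^2\ge 0$ is the determinant of the covariance matrix of $(B^{1}_t-B^{2}_s,\,B^{1}_v-B^{2}_u)$ where $B^1,B^2$ are independent one-dimensional fractional Brownian motions with Hurst parameter $H$; the integrand is understood as $+\infty$ where this determinant vanishes. *)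

theory Defs
  imports "HOL-Analysis.Analysis"
begin

definition fbm_lambda :: "real \<Rightarrow> real \<Rightarrow> real \<Rightarrow> real" where
  "fbm_lambda H s t = s powr (2*H) + t powr (2*H)"

definition fbm_mu :: "real \<Rightarrow> real \<Rightarrow> real \<Rightarrow> real \<Rightarrow> real \<Rightarrow> real" where
  "fbm_mu H s t u v = (s powr (2*H) + t powr (2*H) + u powr (2*H) + v powr (2*H)
      - \<bar>t - v\<bar> powr (2*H) - \<bar>s - u\<bar> powr (2*H)) / 2"

definition fbm_det :: "real \<Rightarrow> real \<Rightarrow> real \<Rightarrow> real \<Rightarrow> real \<Rightarrow> real" where
  "fbm_det H s t u v = fbm_lambda H s t * fbm_lambda H u v - (fbm_mu H s t u v)\<^sup>2"

definition fbm_integrand :: "real \<Rightarrow> nat \<Rightarrow> real \<Rightarrow> real \<Rightarrow> real \<Rightarrow> real \<Rightarrow> ennreal" where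
  "fbm_integrand H d s t u v =
     (if fbm_det H s t u v = 0 then \<infinity> else ennreal (fbm_det H s t u v powr (- (real d / 2))))"

definition A_T :: "real \<Rightarrow> nat \<Rightarrow> real \<Rightarrow> ennreal" where
  "A_T H d T = (\<integral>\<^sup>+ (s, t, u, v) \<in> {0..T} \<times> {0..T} \<times> {0..T} \<times> {0..T}.
       fbm_integrand H d s t u v \<partial>lborel)"

end

theory Submission
  imports Defs
begin

lemma bern_powr:
  fixes H x :: real assumes "0 < H" "H < 1" "0 \<le> x"
  shows "(1 + x) powr H \<le> 1 + H * x"
proof -
  have "(1+x) powr H * 1 powr (1-H) \<le> H*(1+x) + (1-H)*1"
    by (rule Youngs_inequality_0) (use assms in auto)
  thus ?thesis by (simp add: algebra_simps)
qed

lemma concave_powr: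
  fixes H v w :: real assumes H: "0 < H" "H < 1" and v: "0 < v" "v \<le> w"
  shows "(v + w) powr H \<le> w powr H + H * v powr H"
proof -
  have w: "w > 0" using v by linarith
  have e: "v + w = w * (1 + v/w)" using w by (simp add: field_simps)
  have "(v + w) powr H = w powr H * (1 + v/w) powr H"
    by (subst e, rule powr_mult)
  also have "\<dots> \<le> w powr H * (1 + H * (v/w))"
    using bern_powr[OF H, of "v/w"] v w by (intro mult_left_mono) auto
  also have "\<dots> = w powr H + H * v * (w powr H / w)" using w by (simp add: field_simps)
  also have "w powr H / w = w powr (H - 1)" using w by (simp add: powr_diff)
  finally have 1: "(v + w) powr H \<le> w powr H + H * v * w powr (H - 1)" .
  have "w powr (H - 1) \<le> v powr (H - 1)"
    using v H by (intro powr_mono2') auto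
  hence "H * v * w powr (H - 1) \<le> H * v * v powr (H - 1)"
    using v H by (intro mult_left_mono) auto
  also have "H * v * v powr (H - 1) = H * v powr H" using v by (simp add: powr_diff)
  finally show ?thesis using 1 by linarith
qed

definition Dk :: "real \<Rightarrow> real \<Rightarrow> real \<Rightarrow> real" where
  "Dk H t v = t powr (2*H) * v powr (2*H) - ((t powr (2*H) + v powr (2*H) - \<bar>t-v\<bar> powr (2*H))/2)^2"

lemma mult4_mono:
  fixes a b c d a' b' c' d' :: real
  assumes "0 \<le> a'" "a' \<le> a" "0 \<le> b'" "b' \<le> b" "0 \<le> c'" "c' \<le> c" "0 \<le> d'" "d' \<le> d"
  shows "a' * b' * c' * d' \<le> a * b * c * d"
proof -
  have "a' * b' \<le> a * b" using assms by (intro mult_mono) auto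
  moreover have "c' * d' \<le> c * d" using assms by (intro mult_mono) auto
  ultimately have "(a' * b') * (c' * d') \<le> (a * b) * (c * d)"
    using assms by (intro mult_mono) auto
  thus ?thesis by (simp add: mult.assoc)
qed

lemma powr2H: "0 \<le> (x::real) \<Longrightarrow> x powr (2*H) = (x powr H)^2"
  by (simp add: power2_eq_square powr_add[symmetric])

lemma Dk_sym: "Dk H t v = Dk H v t"
  unfolding Dk_def by (simp add: abs_minus_commute algebra_simps)

lemma Dk_lower_aux:
  fixes H t v :: real assumes H: "0 < H" "H < 1" and v: "0 \<le> v" "v \<le> t"
  shows "(1-H) * (v * (t - v)) powr (2*H) \<le> 4 * Dk H t v"
proof -
  define w where "w = t - v"
  have w: "w \<ge> 0" "t = v + w" using v by (auto simp: w_def)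
  define \<alpha> where "\<alpha> = w powr H"
  define \<beta> where "\<beta> = v powr H"
  define \<gamma> where "\<gamma> = t powr H"
  have abs: "\<bar>t - v\<bar> = w" using w by auto
  have D: "4 * Dk H t v = (\<alpha>+\<beta>-\<gamma>)*(\<alpha>+\<gamma>-\<beta>)*(\<gamma>+\<beta>-\<alpha>)*(\<alpha>+\<beta>+\<gamma>)"
  proof -
    have "t powr (2*H) = \<gamma>^2" "v powr (2*H) = \<beta>^2" "w powr (2*H) = \<alpha>^2"
      unfolding \<alpha>_def \<beta>_def \<gamma>_def using w v by (auto intro: powr2H)
    thus ?thesis unfolding Dk_def abs by (simp add: power2_eq_square field_simps)
  qed
  have R: "(v * (t - v)) powr (2*H) = (\<alpha>*\<beta>)^2"
  proof -
    have "v * (t - v) = v * w" by (simp add: w_def)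
    moreover have "(v * w) powr (2*H) = (\<alpha>*\<beta>)^2" unfolding \<alpha>_def \<beta>_def
      using w v by (subst powr2H) (auto simp: powr_mult power_mult_distrib)
    ultimately show ?thesis by metis
  qed
  have ga: "\<alpha> \<le> \<gamma>" "\<beta> \<le> \<gamma>" unfolding \<alpha>_def \<beta>_def \<gamma>_def using w v H
    by (auto intro: powr_mono2)
  have pos: "\<alpha> \<ge> 0" "\<beta> \<ge> 0" by (auto simp: \<alpha>_def \<beta>_def)
  show ?thesis
  proof (cases "v = 0 \<or> w = 0")
    case True
    hence "\<alpha> = 0 \<or> \<beta> = 0" by (auto simp: \<alpha>_def \<beta>_def)
    moreover have "\<alpha> = 0 \<Longrightarrow> \<beta> = \<gamma>" "\<beta> = 0 \<Longrightarrow> \<alpha> = \<gamma>"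
      using True w unfolding \<alpha>_def \<beta>_def \<gamma>_def by auto
    ultimately show ?thesis unfolding R D by auto
  next
    case False
    hence vw: "v > 0" "w > 0" using v w by auto
    show ?thesis
    proof (cases "v \<le> w")
      case True
      have "\<gamma> \<le> \<alpha> + H * \<beta>" unfolding \<alpha>_def \<beta>_def \<gamma>_def w(2)
        using concave_powr[OF H vw(1) True] .
      hence "(1-H)*\<beta> \<le> \<alpha>+\<beta>-\<gamma>" by (simp add: algebra_simps)
      hence "((1-H)*\<beta>) * \<alpha> * \<beta> * \<alpha> \<le> (\<alpha>+\<beta>-\<gamma>)*(\<alpha>+\<gamma>-\<beta>)*(\<gamma>+\<beta>-\<alpha>)*(\<alpha>+\<beta>+\<gamma>)"
        using ga pos H by (intro mult4_mono) auto
      thus ?thesis unfolding R D by (simp add: power2_eq_square algebra_simps)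
    next
      case False
      hence wv: "w \<le> v" by simp
      have "\<gamma> \<le> \<beta> + H * \<alpha>" unfolding \<alpha>_def \<beta>_def \<gamma>_def w(2)
        using concave_powr[OF H vw(2) wv] by (simp add: add.commute)
      hence "(1-H)*\<alpha> \<le> \<alpha>+\<beta>-\<gamma>" by (simp add: algebra_simps)
      hence "((1-H)*\<alpha>) * \<alpha> * \<beta> * \<beta> \<le> (\<alpha>+\<beta>-\<gamma>)*(\<alpha>+\<gamma>-\<beta>)*(\<gamma>+\<beta>-\<alpha>)*(\<alpha>+\<beta>+\<gamma>)"
        using ga pos H by (intro mult4_mono) auto
      thus ?thesis unfolding R D by (simp add: power2_eq_square algebra_simps)
    qed
  qed
qed

lemma Dk_lower:
  fixes H t v :: real assumes H: "0 < H" "H < 1" and v: "0 \<le> v" "0 \<le> t"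
  shows "(1-H) * (t * min v \<bar>t-v\<bar> / 2) powr (2*H) \<le> 4 * Dk H t v"
proof -
  have key: "t * min v \<bar>t-v\<bar> / 2 \<le> min t v * \<bar>t - v\<bar>"
  proof (cases "v \<le> t")
    case True
    have "t * min v (t-v) \<le> 2 * (v * (t-v))"
    proof (cases "v \<le> t - v")
      case True
      have "0 \<le> v * (t - 2 * v)" using True v by auto
      thus ?thesis using True by (simp add: min_def algebra_simps)
    next
      case False
      have "0 \<le> (t - v) * (2 * v - t)" using False True v by auto
      thus ?thesis using False by (simp add: min_def algebra_simps)
    qed
    thus ?thesis using True by (auto simp: min_def)
  next
    case False
    thus ?thesis using v by (auto simp: min_def intro: mult_left_mono)
  qed
  have nn: "0 \<le> t * min v \<bar>t-v\<bar> / 2" using v by auto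
  have "(t * min v \<bar>t-v\<bar> / 2) powr (2*H) \<le> (min t v * \<bar>t - v\<bar>) powr (2*H)"
    using key nn H by (intro powr_mono2) auto
  also have "(1-H) * (min t v * \<bar>t - v\<bar>) powr (2*H) \<le> 4 * Dk H t v"
  proof (cases "v \<le> t")
    case True
    hence "min t v * \<bar>t - v\<bar> = v * (t - v)" by (simp add: min_def)
    thus ?thesis using Dk_lower_aux[OF H v(1) True] by simp
  next
    case False thus ?thesis using Dk_lower_aux[OF H v(2), of v] Dk_sym[of H t v]
      by (simp add: min_def abs_minus_commute)
  qed
  ultimately show ?thesis using H by (meson less_eq_real_def mult_left_mono diff_ge_0_iff_ge order_trans)
qed

lemma cross_aux:
  fixes X Y z :: real assumes "0 \<le> X" "0 \<le> Y" "z^2 \<le> X * Y"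
  shows "2 * z \<le> X + Y"
proof -
  have 1: "4 * z^2 \<le> 4 * (X*Y)" using assms(3) by linarith
  have 2: "(X+Y)^2 = (X-Y)^2 + 4*(X*Y)" by algebra
  have 3: "(2*z)^2 = 4 * z^2" by algebra
  have "(2*z)^2 \<le> (X+Y)^2" unfolding 2 3 using 1 zero_le_power2[of "X-Y"] by linarith
  moreover have "0 \<le> X + Y" using assms by linarith
  ultimately show ?thesis by (rule power2_le_imp_le)
qed

lemma det_ge:
  fixes H s t u v :: real assumes "0 \<le> Dk H t v" "0 \<le> Dk H s u"
  shows "Dk H t v + Dk H s u \<le> fbm_det H s t u v"
proof -
  define a1 where "a1 = t powr (2*H)"
  define c1 where "c1 = v powr (2*H)"
  define a2 where "a2 = s powr (2*H)"
  define c2 where "c2 = u powr (2*H)"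
  define r1 where "r1 = (t powr (2*H) + v powr (2*H) - \<bar>t-v\<bar> powr (2*H))/2"
  define r2 where "r2 = (s powr (2*H) + u powr (2*H) - \<bar>s-u\<bar> powr (2*H))/2"
  have D1: "Dk H t v = a1*c1 - r1^2" unfolding Dk_def a1_def c1_def r1_def ..
  have D2: "Dk H s u = a2*c2 - r2^2" unfolding Dk_def a2_def c2_def r2_def ..
  have det: "fbm_det H s t u v = (a2 + a1)*(c2 + c1) - (r1 + r2)^2"
  proof -
    have "fbm_mu H s t u v = r1 + r2"
      unfolding fbm_mu_def r1_def r2_def by (simp add: field_simps)
    moreover have "fbm_lambda H s t = a2 + a1" "fbm_lambda H u v = c2 + c1"
      unfolding fbm_lambda_def a1_def c1_def a2_def c2_def by auto
    ultimately show ?thesis unfolding fbm_det_def by simp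
  qed
  have nn: "0 \<le> a1" "0 \<le> c1" "0 \<le> a2" "0 \<le> c2" by (auto simp: a1_def c1_def a2_def c2_def)
  have "(r1*r2)^2 \<le> (a1*c2)*(a2*c1)"
  proof -
    have "r1^2 \<le> a1*c1" "r2^2 \<le> a2*c2" using assms D1 D2 by auto
    hence "r1^2 * r2^2 \<le> (a1*c1)*(a2*c2)" by (intro mult_mono) (auto simp: nn)
    thus ?thesis by (simp add: power_mult_distrib algebra_simps)
  qed
  hence "2*(r1*r2) \<le> a1*c2 + a2*c1" using nn by (intro cross_aux) auto
  thus ?thesis unfolding det D1 D2 by (simp add: power2_eq_square algebra_simps)
qed

lemma det_le:
  fixes H s t u v :: real
  shows "fbm_det H s t u v \<le> fbm_lambda H s t * (\<bar>t-v\<bar> powr (2*H) + \<bar>s-u\<bar> powr (2*H))"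
proof -
  define L where "L = fbm_lambda H s t"
  define R where "R = fbm_lambda H u v"
  define M where "M = fbm_mu H s t u v"
  have e: "\<bar>t-v\<bar> powr (2*H) + \<bar>s-u\<bar> powr (2*H) = L + R - 2*M"
    unfolding L_def R_def M_def fbm_lambda_def fbm_mu_def by (simp add: field_simps)
  have "L*R - M^2 \<le> L*(L + R - 2*M)" using zero_le_power2[of "L - M"]
    by (simp add: power2_eq_square algebra_simps)
  thus ?thesis unfolding e fbm_det_def L_def R_def M_def .
qed

lemma integrand_lower:
  fixes H T s t u v :: real and d :: nat
  assumes H: "0 < H" "H < 1" and Hd: "2 \<le> H * real d" and T: "0 < T"
    and st: "0 \<le> s" "s \<le> T" "0 \<le> t" "t \<le> T" and y: "0 < u - s" "u - s \<le> T"
    and tv: "\<bar>t - v\<bar> \<le> u - s" and v: "0 \<le> v"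
  shows "ennreal ((4 * T powr (2*H)) powr (-(real d/2)) * T powr (2 - H * real d) * (u - s) powr (-2))
     \<le> fbm_integrand H d s t u v"
proof -
  define y where "y = u - s"
  have u: "0 \<le> u" using y st by auto
  have D1: "0 \<le> Dk H t v" using Dk_lower[OF H v st(3)] H
    by (smt (verit) mult_nonneg_nonneg powr_ge_zero)
  have D2: "0 \<le> Dk H s u" using Dk_lower[OF H u st(1)] H
    by (smt (verit) mult_nonneg_nonneg powr_ge_zero)
  have det0: "0 \<le> fbm_det H s t u v" using det_ge[OF D1 D2] D1 D2 by linarith
  have lam: "fbm_lambda H s t \<le> 2 * T powr (2*H)"
    unfolding fbm_lambda_def using st H by (smt (verit) powr_mono2)
  have "\<bar>t-v\<bar> powr (2*H) + \<bar>s-u\<bar> powr (2*H) \<le> 2 * y powr (2*H)"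
  proof -
    have "\<bar>t-v\<bar> powr (2*H) \<le> y powr (2*H)" using tv H by (intro powr_mono2) (auto simp: y_def)
    moreover have "\<bar>s-u\<bar> = y" using y by (auto simp: y_def)
    ultimately show ?thesis by simp
  qed
  hence "fbm_det H s t u v \<le> (2 * T powr (2*H)) * (2 * y powr (2*H))"
    using det_le[of H s t u v] lam by (smt (verit) fbm_lambda_def mult_mono powr_ge_zero)
  hence detle: "fbm_det H s t u v \<le> (4 * T powr (2*H)) * y powr (2*H)" by simp
  show ?thesis
  proof (cases "fbm_det H s t u v = 0")
    case True thus ?thesis by (simp add: fbm_integrand_def)
  next
    case False
    hence dpos: "0 < fbm_det H s t u v" using det0 by simp
    have ypos: "0 < y" using y by (simp add: y_def)
    have "((4 * T powr (2*H)) * y powr (2*H)) powr (-(real d/2)) \<le> fbm_det H s t u v powr (-(real d/2))"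
      using dpos detle by (intro powr_mono2') auto
    also have "((4 * T powr (2*H)) * y powr (2*H)) powr (-(real d/2)) =
       (4 * T powr (2*H)) powr (-(real d/2)) * y powr (- (H * real d))"
      by (simp add: powr_mult powr_powr)
    also have "y powr (- (H * real d)) = y powr (-2) * y powr (2 - H * real d)"
      using ypos by (simp add: powr_add[symmetric])
    finally have 1: "(4 * T powr (2*H)) powr (-(real d/2)) * (y powr (-2) * y powr (2 - H * real d))
        \<le> fbm_det H s t u v powr (-(real d/2))" .
    have "T powr (2 - H * real d) \<le> y powr (2 - H * real d)"
      using ypos y Hd by (intro powr_mono2') (auto simp: y_def)
    hence "(4 * T powr (2*H)) powr (-(real d/2)) * T powr (2 - H * real d) * y powr (-2)
       \<le> (4 * T powr (2*H)) powr (-(real d/2)) * (y powr (-2) * y powr (2 - H * real d))"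
    proof -
      have "0 \<le> (4 * T powr (2*H)) powr (-(real d/2)) * y powr (-2)" by simp
      from mult_left_mono[OF \<open>T powr (2 - H * real d) \<le> y powr (2 - H * real d)\<close> this]
      show ?thesis by (simp add: ac_simps)
    qed
    with 1 show ?thesis using False by (simp add: fbm_integrand_def y_def[symmetric])
  qed
qed

definition Pf :: "real \<Rightarrow> real \<Rightarrow> ennreal" where
  "Pf a x = (if x \<le> 0 then \<infinity> else ennreal (x powr (-a)))"

lemma Pf_pos: "Pf a x > 0" by (auto simp: Pf_def)

lemma Pf_nz[simp]: "Pf a x \<noteq> 0" by (auto simp: Pf_def)

lemma Pf_sum_inf: "x \<le> 0 \<Longrightarrow> Pf a x = \<infinity>" by (simp add: Pf_def)

lemma integrand_upper_real:
  fixes H s t u v :: real and d :: nat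
  assumes H: "0 < H" "H < 1" and pos: "0 < t" "0 < s" "0 < min v \<bar>t-v\<bar>" "0 < min u \<bar>s-u\<bar>"
  defines "a \<equiv> H * real d / 2"
  shows "0 < fbm_det H s t u v \<and> fbm_det H s t u v powr (-(real d/2)) \<le>
     ((2 * ((1-H)/4)) powr (-(real d/2)) * 4 powr a) *
      (t powr (-a) * min v \<bar>t-v\<bar> powr (-a)) * (s powr (-a) * min u \<bar>s-u\<bar> powr (-a))"
proof -
  define n1 where "n1 = min v \<bar>t-v\<bar>"
  define n2 where "n2 = min u \<bar>s-u\<bar>"
  define c where "c = (1-H)/4"
  have c: "c > 0" using H by (simp add: c_def)
  have vu: "0 \<le> v" "0 \<le> u" using pos by auto
  define e1 where "e1 = c * (t * n1 / 2) powr (2*H)"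
  define e2 where "e2 = c * (s * n2 / 2) powr (2*H)"
  have e1: "e1 \<le> Dk H t v" using Dk_lower[OF H vu(1) less_imp_le[OF pos(1)]]
    by (simp add: e1_def c_def n1_def)
  have e2: "e2 \<le> Dk H s u" using Dk_lower[OF H vu(2) less_imp_le[OF pos(2)]]
    by (simp add: e2_def c_def n2_def)
  have e1p: "e1 > 0" "e2 > 0" using pos c by (auto simp: e1_def e2_def n1_def n2_def)
  have det: "e1 + e2 \<le> fbm_det H s t u v" using det_ge[of H t v s u] e1 e2 e1p by linarith
  define q where "q = (t * n1 / 2) * (s * n2 / 2)"
  have qpos: "q > 0" using pos by (simp add: q_def n1_def n2_def)
  define m where "m = 2 * c * q powr H"
  have mpos: "m > 0" using c qpos by (simp add: m_def)
  have "m^2 = 4 * e1 * e2"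
  proof -
    have "(q powr H)^2 = q powr (2*H)" using qpos by (simp add: powr2H)
    also have "\<dots> = (t * n1 / 2) powr (2*H) * (s * n2 / 2) powr (2*H)" unfolding q_def by (rule powr_mult)
    finally show ?thesis by (simp add: m_def e1_def e2_def power_mult_distrib power2_eq_square)
  qed
  also have "4 * e1 * e2 \<le> (e1 + e2)^2"
  proof -
    have "(e1+e2)^2 - 4*e1*e2 = (e1-e2)^2" by (simp add: power2_eq_square algebra_simps)
    thus ?thesis using zero_le_power2[of "e1-e2"] by linarith
  qed
  also have "(e1 + e2)^2 \<le> (fbm_det H s t u v)^2" using det e1p by (intro power_mono) auto
  finally have msq: "m^2 \<le> (fbm_det H s t u v)^2" .
  have "0 \<le> fbm_det H s t u v" using det e1p by linarith
  with msq have "m \<le> fbm_det H s t u v" by (rule power2_le_imp_le)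
  hence dpos: "0 < fbm_det H s t u v" using mpos by linarith
  have "fbm_det H s t u v powr (-(real d/2)) \<le> m powr (-(real d/2))"
    using \<open>m \<le> _\<close> mpos by (intro powr_mono2') auto
  also have "m powr (-(real d/2)) = (2*c) powr (-(real d/2)) * q powr (-a)"
  proof -
    have "m powr (-(real d/2)) = (2*c) powr (-(real d/2)) * (q powr H) powr (-(real d/2))"
      unfolding m_def by (rule powr_mult)
    also have "(q powr H) powr (-(real d/2)) = q powr (H * (-(real d/2)))" by (rule powr_powr)
    also have "H * (-(real d/2)) = -a" unfolding a_def by simp
    finally show ?thesis .
  qed
  also have "q powr (-a) = 4 powr a * (t powr (-a) * n1 powr (-a)) * (s powr (-a) * n2 powr (-a))"
  proof -
    have "q = (t * n1) * (s * n2) / 4" by (simp add: q_def)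
    hence "q powr (-a) = ((t * n1) * (s * n2)) powr (-a) / 4 powr (-a)"
      by (simp only: powr_divide)
    also have "((t * n1) * (s * n2)) powr (-a) = (t powr (-a) * n1 powr (-a)) * (s powr (-a) * n2 powr (-a))"
      by (simp only: powr_mult)
    also have "4 powr (-a) = inverse (4 powr a)" by (rule powr_minus)
    finally show ?thesis by (simp add: divide_inverse ac_simps)
  qed
  finally have fin: "fbm_det H s t u v powr (-(real d/2)) \<le> (2*c) powr (-(real d/2)) *
     (4 powr a * (t powr (-a) * n1 powr (-a)) * (s powr (-a) * n2 powr (-a)))" .
  show ?thesis using dpos fin unfolding c_def n1_def n2_def by (simp only: mult.assoc)
qed

lemma min_powr_le: "0 < min v w \<Longrightarrow> 0 \<le> a \<Longrightarrow> min v w powr (-a) \<le> v powr (-a) + w powr (-a)"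
  for v w a :: real
  by (cases "v \<le> w") (auto simp: min_def)

lemma integrand_upper:
  fixes H s t u v :: real and d :: nat
  assumes H: "0 < H" "H < 1" and nn: "0 \<le> t" "0 \<le> s" "0 \<le> v" "0 \<le> u"
  defines "a \<equiv> H * real d / 2"
  defines "K \<equiv> ennreal ((2 * ((1-H)/4)) powr (-(real d/2)) * 4 powr a)"
  shows "fbm_integrand H d s t u v \<le>
     K * (Pf a t * (Pf a v + Pf a \<bar>t-v\<bar>)) * (Pf a s * (Pf a u + Pf a \<bar>s-u\<bar>))"
proof (cases "t \<le> 0 \<or> v \<le> 0 \<or> \<bar>t-v\<bar> \<le> 0 \<or> s \<le> 0 \<or> u \<le> 0 \<or> \<bar>s-u\<bar> \<le> 0")
  case True
  have Kp: "K > 0" using H by (simp add: K_def)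
  have p1: "Pf a t * (Pf a v + Pf a \<bar>t-v\<bar>) > 0" "Pf a s * (Pf a u + Pf a \<bar>s-u\<bar>) > 0"
    using Pf_pos[of a] by (simp_all add: ennreal_zero_less_mult_iff add_pos_pos)
  have "Pf a t * (Pf a v + Pf a \<bar>t-v\<bar>) = \<infinity> \<or> Pf a s * (Pf a u + Pf a \<bar>s-u\<bar>) = \<infinity>"
  proof -
    have "Pf a t = \<infinity> \<or> Pf a v + Pf a \<bar>t-v\<bar> = \<infinity> \<or> Pf a s = \<infinity> \<or> Pf a u + Pf a \<bar>s-u\<bar> = \<infinity>"
      using True by (elim disjE) (simp_all add: Pf_sum_inf)
    thus ?thesis using Pf_pos[of a] by (elim disjE) (simp_all add: ennreal_mult_eq_top_iff add_pos_pos)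
  qed
  hence "K * (Pf a t * (Pf a v + Pf a \<bar>t-v\<bar>)) * (Pf a s * (Pf a u + Pf a \<bar>s-u\<bar>)) = \<infinity>"
    using Kp p1 by (elim disjE) (simp_all add: ennreal_mult_eq_top_iff order.strict_iff_not)
  thus ?thesis by simp
next
  case False
  hence pos: "0 < t" "0 < s" "0 < min v \<bar>t-v\<bar>" "0 < min u \<bar>s-u\<bar>" "0 < v" "0 < u"
    "0 < \<bar>t-v\<bar>" "0 < \<bar>s-u\<bar>" by auto
  have a: "0 \<le> a" using H by (simp add: a_def)
  note R = integrand_upper_real[OF H pos(1-4), of d, folded a_def]
  define K' where "K' = (2 * ((1-H)/4)) powr (-(real d/2)) * 4 powr a"
  have K': "0 \<le> K'" by (simp add: K'_def)
  have "fbm_det H s t u v powr (-(real d/2)) \<le>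
      K' * (t powr (-a) * (v powr (-a) + \<bar>t-v\<bar> powr (-a))) * (s powr (-a) * (u powr (-a) + \<bar>s-u\<bar> powr (-a)))"
  proof -
    have "min v \<bar>t-v\<bar> powr (-a) \<le> v powr (-a) + \<bar>t-v\<bar> powr (-a)"
         "min u \<bar>s-u\<bar> powr (-a) \<le> u powr (-a) + \<bar>s-u\<bar> powr (-a)"
      using min_powr_le pos a by auto
    hence "K' * (t powr (-a) * min v \<bar>t-v\<bar> powr (-a)) * (s powr (-a) * min u \<bar>s-u\<bar> powr (-a))
      \<le> K' * (t powr (-a) * (v powr (-a) + \<bar>t-v\<bar> powr (-a))) * (s powr (-a) * (u powr (-a) + \<bar>s-u\<bar> powr (-a)))"
      using K' by (intro mult_mono mult_left_mono) auto
    thus ?thesis using R by (simp add: K'_def)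
  qed
  hence le: "ennreal (fbm_det H s t u v powr (-(real d/2))) \<le>
      ennreal (K' * (t powr (-a) * (v powr (-a) + \<bar>t-v\<bar> powr (-a))) * (s powr (-a) * (u powr (-a) + \<bar>s-u\<bar> powr (-a))))"
    by (rule ennreal_leI)
  have eq: "ennreal (K' * (t powr (-a) * (v powr (-a) + \<bar>t-v\<bar> powr (-a))) * (s powr (-a) * (u powr (-a) + \<bar>s-u\<bar> powr (-a))))
     = K * (Pf a t * (Pf a v + Pf a \<bar>t-v\<bar>)) * (Pf a s * (Pf a u + Pf a \<bar>s-u\<bar>))"
    using pos K' unfolding K_def K'_def[symmetric] Pf_def
    by (simp add: ennreal_mult ennreal_plus)
  have "fbm_det H s t u v \<noteq> 0" using R by simp
  thus ?thesis using le eq by (simp add: fbm_integrand_def)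
qed

lemma Pf_measurable[measurable]: "Pf a \<in> borel_measurable borel"
  unfolding Pf_def by measurable

lemma I1_eq:
  fixes a T :: real assumes a: "0 \<le> a" "a < 1" and T: "0 < T"
  shows "(\<integral>\<^sup>+x. indicator {0..T} x * Pf a x \<partial>lborel) = ennreal (T powr (1-a) / (1-a))"
proof -
  have "(\<integral>\<^sup>+x. indicator {0..T} x * Pf a x \<partial>lborel) =
        (\<integral>\<^sup>+x. ennreal (indicator {0..T} x * x powr (-a)) \<partial>lborel)"
  proof (intro nn_integral_cong_AE eventually_mono[OF AE_lborel_singleton[of 0]])
    fix x :: real assume "x \<noteq> 0"
    thus "indicator {0..T} x * Pf a x = ennreal (indicator {0..T} x * x powr (-a))"
      by (auto simp: Pf_def indicator_def)
  qed
  also have "\<dots> = ennreal (T powr (-a+1) / (-a+1))"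
    using has_integral_powr_from_0[of "-a" T] a T
    by (intro nn_integral_has_integral_lebesgue) auto
  finally show ?thesis by simp
qed

lemma I1_fin:
  fixes a T :: real assumes a: "0 \<le> a" "a < 1" and T: "0 < T"
  shows "(\<integral>\<^sup>+x. indicator {0..T} x * Pf a x \<partial>lborel) < \<infinity>"
  using I1_eq[OF assms] by simp

lemma I2:
  fixes a T t :: real assumes T: "0 < T" and t: "0 \<le> t" "t \<le> T"
  shows "(\<integral>\<^sup>+v. indicator {0..T} v * Pf a \<bar>t-v\<bar> \<partial>lborel) \<le>
         2 * (\<integral>\<^sup>+x. indicator {0..T} x * Pf a x \<partial>lborel)"
proof -
  define f where "f = (\<lambda>w::real. indicator {-T..T} w * Pf a \<bar>w\<bar>)"
  define g where "g = (\<lambda>w::real. indicator {0..T} w * Pf a w)"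
  have fm[measurable]: "f \<in> borel_measurable borel" unfolding f_def by measurable
  have gm[measurable]: "g \<in> borel_measurable borel" unfolding g_def by measurable
  have "(\<integral>\<^sup>+v. indicator {0..T} v * Pf a \<bar>t-v\<bar> \<partial>lborel) \<le> (\<integral>\<^sup>+v. f (t + (-1) * v) \<partial>lborel)"
    using t by (intro nn_integral_mono) (auto simp: f_def indicator_def)
  also have "\<dots> = (\<integral>\<^sup>+w. f w \<partial>lborel)"
    using nn_integral_real_affine[OF fm, of "-1" t] by simp
  also have "\<dots> \<le> (\<integral>\<^sup>+w. g w + g (0 + (-1) * w) \<partial>lborel)"
    by (intro nn_integral_mono) (auto simp: f_def g_def indicator_def abs_if)
  also have "\<dots> = (\<integral>\<^sup>+w. g w \<partial>lborel) + (\<integral>\<^sup>+w. g (0 + (-1) * w) \<partial>lborel)"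
    by (intro nn_integral_add) auto
  also have "(\<integral>\<^sup>+w. g (0 + (-1) * w) \<partial>lborel) = (\<integral>\<^sup>+w. g w \<partial>lborel)"
    using nn_integral_real_affine[OF gm, of "-1" 0] by simp
  finally show ?thesis by (simp add: g_def mult_2)
qed

lemma ln_integral_div:
  fixes c e :: real assumes c: "0 < c" and e: "0 < e"
  shows "(\<integral>\<^sup>+y. indicator {0<..e} y * ennreal (c / y) \<partial>lborel) = \<infinity>"
proof -
  define I where "I = (\<integral>\<^sup>+y. indicator {0<..e} y * ennreal (c / y) \<partial>lborel)"
  have lb: "ennreal (c * (ln e - ln \<delta>)) \<le> I" if d: "0 < \<delta>" "\<delta> \<le> e" for \<delta>
  proof -
    have ftc: "((\<lambda>y. 1/y) has_integral (ln e - ln \<delta>)) {\<delta>..e}"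
    proof (rule fundamental_theorem_of_calculus)
      show "\<delta> \<le> e" by fact
      fix x assume "x \<in> {\<delta>..e}"
      hence "x > 0" using d by auto
      hence "(ln has_real_derivative 1 / x) (at x within {\<delta>..e})"
        by (auto intro!: derivative_eq_intros)
      thus "(ln has_vector_derivative 1 / x) (at x within {\<delta>..e})"
        by (simp add: has_real_derivative_iff_has_vector_derivative)
    qed
    have "((\<lambda>y. c * (1/y)) has_integral (c * (ln e - ln \<delta>))) {\<delta>..e}"
      by (rule has_integral_mult_right[OF ftc])
    hence "(\<integral>\<^sup>+y. ennreal (indicator {\<delta>..e} y * (c * (1/y))) \<partial>lborel) = ennreal (c * (ln e - ln \<delta>))"
      using d c by (intro nn_integral_has_integral_lebesgue) auto
    moreover have "(\<integral>\<^sup>+y. ennreal (indicator {\<delta>..e} y * (c * (1/y))) \<partial>lborel) \<le> I"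
      unfolding I_def using d by (intro nn_integral_mono) (auto simp: indicator_def)
    ultimately show ?thesis by simp
  qed
  have "I = \<infinity>"
  proof (rule ccontr)
    assume "I \<noteq> \<infinity>"
    then obtain r where r: "I = ennreal r" "0 \<le> r" using ennreal_cases[of I] by auto
    define \<delta> where "\<delta> = e * exp (- (r / c) - 1)"
    have "0 \<le> r / c" using r c by simp
    hence "exp (- (r / c) - 1) \<le> 1" by simp
    hence dp: "0 < \<delta>" "\<delta> \<le> e" using e by (auto simp: \<delta>_def mult_le_cancel_left1)
    have "ln \<delta> = ln e - r/c - 1" using e by (simp add: \<delta>_def ln_mult)
    hence "c * (ln e - ln \<delta>) = r + c" using c by (simp add: field_simps)
    with lb[OF dp] r have "ennreal (r + c) \<le> ennreal r" by simp
    thus False using c r by (simp add: ennreal_le_iff)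
  qed
  thus ?thesis by (simp add: I_def)
qed

lemma tonelli:
  fixes f :: "real \<times> 'b::euclidean_space \<Rightarrow> ennreal"
  assumes f: "f \<in> borel_measurable borel"
  shows "(\<integral>\<^sup>+x. f x \<partial>lborel) = (\<integral>\<^sup>+a. \<integral>\<^sup>+b. f (a,b) \<partial>lborel \<partial>lborel)"
proof -
  have "f \<in> borel_measurable (lborel \<Otimes>\<^sub>M lborel)" using f by (simp add: lborel_prod)
  hence "(\<integral>\<^sup>+a. \<integral>\<^sup>+b. f (a,b) \<partial>lborel \<partial>lborel) = (\<integral>\<^sup>+x. f x \<partial>(lborel \<Otimes>\<^sub>M lborel))"
    by (rule lborel.nn_integral_fst)
  thus ?thesis by (simp add: lborel_prod)
qed

lemma tonelli4:
  fixes f :: "real \<times> real \<times> real \<times> real \<Rightarrow> ennreal"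
  assumes f[measurable]: "f \<in> borel_measurable borel"
  shows "(\<integral>\<^sup>+x. f x \<partial>lborel) = (\<integral>\<^sup>+s. \<integral>\<^sup>+t. \<integral>\<^sup>+u. \<integral>\<^sup>+v. f (s,t,u,v) \<partial>lborel \<partial>lborel \<partial>lborel \<partial>lborel)"
proof -
  have "(\<integral>\<^sup>+x. f x \<partial>lborel) = (\<integral>\<^sup>+s. \<integral>\<^sup>+y. f (s,y) \<partial>lborel \<partial>lborel)" by (rule tonelli) fact
  also have "\<dots> = (\<integral>\<^sup>+s. \<integral>\<^sup>+t. \<integral>\<^sup>+z. f (s,t,z) \<partial>lborel \<partial>lborel \<partial>lborel)"
    by (intro nn_integral_cong tonelli) measurable
  also have "\<dots> = (\<integral>\<^sup>+s. \<integral>\<^sup>+t. \<integral>\<^sup>+u. \<integral>\<^sup>+v. f (s,t,u,v) \<partial>lborel \<partial>lborel \<partial>lborel \<partial>lborel)"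
    by (intro nn_integral_cong tonelli) measurable
  finally show ?thesis .
qed

lemma det_measurable:
  "(\<lambda>x. case x of (s,t,u,v) \<Rightarrow> fbm_det H s t u v) \<in> borel_measurable (borel :: (real \<times> real \<times> real \<times> real) measure)"
proof -
  have "(\<lambda>x. case x of (s,t,u,v) \<Rightarrow> fbm_det H s t u v) \<in> borel_measurable (borel \<Otimes>\<^sub>M (borel \<Otimes>\<^sub>M (borel \<Otimes>\<^sub>M (borel :: real measure))))"
    unfolding fbm_det_def fbm_lambda_def fbm_mu_def by measurable
  thus ?thesis by (simp add: borel_prod)
qed

lemma phi_measurable:
  "(\<lambda>y::real. if y = 0 then \<infinity> else ennreal (y powr e)) \<in> borel_measurable borel"
  by measurable

lemma integrand_measurable[measurable]:
  "(\<lambda>x. case x of (s,t,u,v) \<Rightarrow> fbm_integrand H d s t u v) \<in> borel_measurable (borel :: (real \<times> real \<times> real \<times> real) measure)"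
proof -
  have e: "(\<lambda>x. case x of (s,t,u,v) \<Rightarrow> fbm_integrand H d s t u v) =
     (\<lambda>y::real. if y = 0 then \<infinity> else ennreal (y powr (- (real d / 2)))) o (\<lambda>x. case x of (s,t,u,v) \<Rightarrow> fbm_det H s t u v)"
    by (auto simp: fun_eq_iff fbm_integrand_def split: prod.splits)
  show ?thesis unfolding e by (rule measurable_comp[OF det_measurable phi_measurable])
qed

lemma A_T_eq: "A_T H d T = (\<integral>\<^sup>+x. (case x of (s,t,u,v) \<Rightarrow> fbm_integrand H d s t u v) *
    indicator ({0..T} \<times> {0..T} \<times> {0..T} \<times> {0..T}) x \<partial>lborel)"
  unfolding A_T_def by (simp add: case_prod_beta')

lemma finite_dir:
  fixes H T :: real and d :: nat
  assumes H: "0 < H" "H < 1" and Hd: "H * real d < 2" and T: "0 < T"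
  shows "A_T H d T < \<infinity>"
proof -
  define a where "a = H * real d / 2"
  have a: "0 \<le> a" "a < 1" using H Hd by (auto simp: a_def)
  define K where "K = ennreal ((2 * ((1-H)/4)) powr (-(real d/2)) * 4 powr a)"
  define g where "g = (\<lambda>x::real. indicator {0..T} x * Pf a x)"
  define G where "G = (\<lambda>t v::real. g t * (g v + indicator {0..T} v * Pf a \<bar>t-v\<bar>))"
  define I where "I = (\<integral>\<^sup>+x. g x \<partial>lborel)"
  have Ifin: "I < \<infinity>" unfolding I_def g_def using I1_fin[OF a T] .
  define C where "C = I + 2 * I"
  have gm[measurable]: "g \<in> borel_measurable borel" unfolding g_def by measurable
  have Gm[measurable]: "G t \<in> borel_measurable borel" for t unfolding G_def by measurable
  define B where "B = (\<lambda>x. case x of (s,t,u,v) \<Rightarrow> K * G t v * G s u)"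
  have Bm: "B \<in> borel_measurable (borel :: (real \<times> real \<times> real \<times> real) measure)"
  proof -
    have P: "(\<lambda>p::real\<times>real. Pf a (fst p)) \<in> borel_measurable (borel \<Otimes>\<^sub>M borel)"
      "(\<lambda>p::real\<times>real. Pf a (snd p)) \<in> borel_measurable (borel \<Otimes>\<^sub>M borel)"
      "(\<lambda>p::real\<times>real. Pf a \<bar>fst p - snd p\<bar>) \<in> borel_measurable (borel \<Otimes>\<^sub>M borel)"
      "(\<lambda>p::real\<times>real. indicator {0..T} (fst p) :: ennreal) \<in> borel_measurable (borel \<Otimes>\<^sub>M borel)"
      "(\<lambda>p::real\<times>real. indicator {0..T} (snd p) :: ennreal) \<in> borel_measurable (borel \<Otimes>\<^sub>M borel)"
      by measurable
    have Gp: "(\<lambda>p::real\<times>real. G (fst p) (snd p)) \<in> borel_measurable borel"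
    proof -
      have "(\<lambda>p::real\<times>real. G (fst p) (snd p)) \<in> borel_measurable (borel \<Otimes>\<^sub>M borel)"
        unfolding G_def g_def by (intro borel_measurable_times_ennreal borel_measurable_add P)
      thus ?thesis by (simp add: borel_prod)
    qed
    have m1: "(\<lambda>x::real\<times>real\<times>real\<times>real. (fst (snd x), snd (snd (snd x)))) \<in> borel \<rightarrow>\<^sub>M borel"
      by (intro borel_measurable_continuous_onI continuous_intros)
    have m2: "(\<lambda>x::real\<times>real\<times>real\<times>real. (fst x, fst (snd (snd x)))) \<in> borel \<rightarrow>\<^sub>M borel"
      by (intro borel_measurable_continuous_onI continuous_intros)
    have e: "B = (\<lambda>x. K * ((\<lambda>p. G (fst p) (snd p)) o (\<lambda>x. (fst (snd x), snd (snd (snd x))))) x *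
                  ((\<lambda>p. G (fst p) (snd p)) o (\<lambda>x. (fst x, fst (snd (snd x))))) x)"
      by (auto simp: B_def fun_eq_iff split: prod.splits)
    show ?thesis unfolding e
      by (intro borel_measurable_times_ennreal measurable_const measurable_comp[OF m1 Gp] measurable_comp[OF m2 Gp]) simp
  qed
have GCall: "(\<integral>\<^sup>+v. G t v \<partial>lborel) \<le> g t * C" for t
  proof -
    have "(\<integral>\<^sup>+v. G t v \<partial>lborel) = g t * (\<integral>\<^sup>+v. g v + indicator {0..T} v * Pf a \<bar>t-v\<bar> \<partial>lborel)"
      unfolding G_def by (rule nn_integral_cmult) measurable
    also have "(\<integral>\<^sup>+v. g v + indicator {0..T} v * Pf a \<bar>t-v\<bar> \<partial>lborel) =
        I + (\<integral>\<^sup>+v. indicator {0..T} v * Pf a \<bar>t-v\<bar> \<partial>lborel)"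
      unfolding I_def by (rule nn_integral_add) measurable
    finally have eq: "(\<integral>\<^sup>+v. G t v \<partial>lborel) = g t * (I + (\<integral>\<^sup>+v. indicator {0..T} v * Pf a \<bar>t-v\<bar> \<partial>lborel))" .
    show ?thesis
    proof (cases "t \<in> {0..T}")
      case True
      have "(\<integral>\<^sup>+v. indicator {0..T} v * Pf a \<bar>t-v\<bar> \<partial>lborel) \<le> 2 * I"
        unfolding I_def g_def using I2[OF T, of t a] True by auto
      hence "I + (\<integral>\<^sup>+v. indicator {0..T} v * Pf a \<bar>t-v\<bar> \<partial>lborel) \<le> C"
        unfolding C_def by (rule add_left_mono)
      thus ?thesis unfolding eq by (rule mult_left_mono) simp
    next
      case False thus ?thesis unfolding eq by (simp add: g_def)
    qed
  qed
  have "A_T H d T \<le> (\<integral>\<^sup>+x. B x \<partial>lborel)"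
    unfolding A_T_eq
  proof (intro nn_integral_mono)
    fix x :: "real \<times> real \<times> real \<times> real"
    obtain s t u v where x: "x = (s,t,u,v)" by (cases x) auto
    show "(case x of (s,t,u,v) \<Rightarrow> fbm_integrand H d s t u v) * indicator ({0..T} \<times> {0..T} \<times> {0..T} \<times> {0..T}) x \<le> B x"
    proof (cases "x \<in> {0..T} \<times> {0..T} \<times> {0..T} \<times> {0..T}")
      case True
      hence box: "s \<in> {0..T}" "t \<in> {0..T}" "u \<in> {0..T}" "v \<in> {0..T}" by (auto simp: x)
      have "fbm_integrand H d s t u v \<le>
        K * (Pf a t * (Pf a v + Pf a \<bar>t-v\<bar>)) * (Pf a s * (Pf a u + Pf a \<bar>s-u\<bar>))"
        unfolding K_def a_def using integrand_upper[OF H, of t s v u d] box by auto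
      also have "\<dots> = B x" using box by (simp add: B_def x G_def g_def)
      finally show ?thesis using True by (simp add: x)
    qed simp
  qed
  also have "\<dots> = (\<integral>\<^sup>+s. \<integral>\<^sup>+t. \<integral>\<^sup>+u. \<integral>\<^sup>+v. K * G t v * G s u \<partial>lborel \<partial>lborel \<partial>lborel \<partial>lborel)"
    by (subst tonelli4[OF Bm]) (simp add: B_def)
  also have "\<dots> \<le> (\<integral>\<^sup>+s. \<integral>\<^sup>+t. \<integral>\<^sup>+u. (K * G s u) * (g t * C) \<partial>lborel \<partial>lborel \<partial>lborel)"
  proof (intro nn_integral_mono)
    fix s t u
    note GC = GCall[of t]
    have "(\<integral>\<^sup>+v. K * G t v * G s u \<partial>lborel) = (K * G s u) * (\<integral>\<^sup>+v. G t v \<partial>lborel)"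
      by (subst nn_integral_cmult[symmetric]) (simp_all add: ac_simps)
    also have "\<dots> \<le> (K * G s u) * (g t * C)" using GC by (rule mult_left_mono) simp
    finally show "(\<integral>\<^sup>+v. K * G t v * G s u \<partial>lborel) \<le> (K * G s u) * (g t * C)" .
  qed
  also have "\<dots> \<le> (\<integral>\<^sup>+s. \<integral>\<^sup>+t. (K * (g t * C)) * (g s * C) \<partial>lborel \<partial>lborel)"
  proof (intro nn_integral_mono)
    fix s t
    note GC = GCall[of s]
    have "(\<integral>\<^sup>+u. (K * G s u) * (g t * C) \<partial>lborel) = (K * (g t * C)) * (\<integral>\<^sup>+u. G s u \<partial>lborel)"
      by (subst nn_integral_cmult[symmetric]) (simp_all add: ac_simps)
    also have "\<dots> \<le> (K * (g t * C)) * (g s * C)" using GC by (rule mult_left_mono) simp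
    finally show "(\<integral>\<^sup>+u. (K * G s u) * (g t * C) \<partial>lborel) \<le> (K * (g t * C)) * (g s * C)" .
  qed
  also have "\<dots> = (\<integral>\<^sup>+s. (K * C * C * g s) * I \<partial>lborel)"
  proof (intro nn_integral_cong)
    fix s
    have "(\<integral>\<^sup>+t. (K * (g t * C)) * (g s * C) \<partial>lborel) = (\<integral>\<^sup>+t. (K * C * C * g s) * g t \<partial>lborel)"
      by (simp add: ac_simps)
    also have "\<dots> = (K * C * C * g s) * I" unfolding I_def by (rule nn_integral_cmult) simp
    finally show "(\<integral>\<^sup>+t. (K * (g t * C)) * (g s * C) \<partial>lborel) = (K * C * C * g s) * I" .
  qed
  also have "\<dots> = (K * C * C * I) * I"
  proof -
    have "(\<integral>\<^sup>+s. (K * C * C * g s) * I \<partial>lborel) = (\<integral>\<^sup>+s. (K * C * C * I) * g s \<partial>lborel)"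
      by (simp add: ac_simps)
    also have "\<dots> = (K * C * C * I) * I" unfolding I_def by (rule nn_integral_cmult) simp
    finally show ?thesis .
  qed
  also have "\<dots> < \<infinity>" using Ifin by (simp add: C_def K_def ennreal_mult_less_top)
  finally show ?thesis .
qed

lemma infinite_dir:
  fixes H T :: real and d :: nat
  assumes H: "0 < H" "H < 1" and Hd: "2 \<le> H * real d" and T: "0 < T"
  shows "A_T H d T = \<infinity>"
proof -
  define e where "e = T/2"
  have e: "0 < e" "e \<le> T" "e + e = T" using T by (auto simp: e_def)
  define c where "c = (4 * T powr (2*H)) powr (-(real d/2)) * T powr (2 - H * real d)"
  have c: "0 < c" using T by (simp add: c_def)
  define P where "P = (\<lambda>s t u v::real. 0 \<le> s \<and> s \<le> e \<and> 0 \<le> t \<and> t \<le> e \<and> s < u \<and> u \<le> s + e \<and> t \<le> v \<and> v \<le> t + (u - s))"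
  define L where "L = (\<lambda>x. case x of (s,t,u,v) \<Rightarrow> if P s t u v then ennreal (c * (u - s) powr (-2)) else 0)"
  have Lm: "L \<in> borel_measurable (borel :: (real \<times> real \<times> real \<times> real) measure)"
  proof -
    have "L \<in> borel_measurable (borel \<Otimes>\<^sub>M (borel \<Otimes>\<^sub>M (borel \<Otimes>\<^sub>M (borel :: real measure))))"
      unfolding L_def P_def by measurable
    thus ?thesis by (simp add: borel_prod)
  qed
  have "(\<integral>\<^sup>+x. L x \<partial>lborel) \<le> A_T H d T"
    unfolding A_T_eq
  proof (intro nn_integral_mono)
    fix x :: "real \<times> real \<times> real \<times> real"
    obtain s t u v where x: "x = (s,t,u,v)" by (cases x) auto
    show "L x \<le> (case x of (s,t,u,v) \<Rightarrow> fbm_integrand H d s t u v) * indicator ({0..T} \<times> {0..T} \<times> {0..T} \<times> {0..T}) x"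
    proof (cases "P s t u v")
      case True
      hence p: "0 \<le> s" "s \<le> e" "0 \<le> t" "t \<le> e" "s < u" "u \<le> s + e" "t \<le> v" "v \<le> t + (u - s)"
        by (auto simp: P_def)
      have box: "x \<in> {0..T} \<times> {0..T} \<times> {0..T} \<times> {0..T}" using p e by (auto simp: x)
      have "ennreal (c * (u - s) powr (-2)) \<le> fbm_integrand H d s t u v"
        unfolding c_def using integrand_lower[OF H Hd T, of s t u v] p e by auto
      thus ?thesis using True box by (simp add: L_def x)
    qed (simp add: L_def x)
  qed
  moreover have "(\<integral>\<^sup>+x. L x \<partial>lborel) = \<infinity>"
  proof -
    have inner: "(\<integral>\<^sup>+u. \<integral>\<^sup>+v. L (s,t,u,v) \<partial>lborel \<partial>lborel) =
        indicator {0..e} s * indicator {0..e} t * \<infinity>" for s t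
    proof -
      have v: "(\<integral>\<^sup>+v. L (s,t,u,v) \<partial>lborel) =
          indicator {0..e} s * indicator {0..e} t * (indicator {0<..e} (-s + 1 * u) * ennreal (c / (-s + 1 * u)))" for u
      proof -
        have "(\<integral>\<^sup>+v. L (s,t,u,v) \<partial>lborel) =
          (\<integral>\<^sup>+v. (indicator {0..e} s * indicator {0..e} t * indicator {0<..e} (u - s) * ennreal (c * (u - s) powr (-2)))
                   * indicator {t..t + (u - s)} v \<partial>lborel)"
          by (intro nn_integral_cong) (auto simp: L_def P_def indicator_def)
        also have "\<dots> = (indicator {0..e} s * indicator {0..e} t * indicator {0<..e} (u - s) * ennreal (c * (u - s) powr (-2)))
                   * emeasure lborel {t..t + (u - s)}"
          by (rule nn_integral_cmult_indicator) simp
        also have "\<dots> = indicator {0..e} s * indicator {0..e} t * (indicator {0<..e} (-s + 1 * u) * ennreal (c / (-s + 1 * u)))"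
        proof (cases "u - s \<in> {0<..e}")
          case True
          hence "0 < u - s" by auto
          hence y: "0 < u - s" by simp
          have "(u - s) powr (-2) = 1 / (u - s)^2"
            using y by (simp add: powr_minus_divide powr_numeral)
          moreover have "c * (1 / z^2) * z = c / z" if "0 < z" for z :: real
            using that by (simp add: power2_eq_square field_simps)
          ultimately have "c * (u - s) powr (-2) * (u - s) = c / (u - s)"
            using y by metis
          moreover have "ennreal (c * (u - s) powr (-2)) * ennreal (u - s) = ennreal (c * (u - s) powr (-2) * (u - s))"
            using y c by (simp add: ennreal_mult)
          ultimately have "ennreal (c * (u - s) powr (-2)) * ennreal (u - s) = ennreal (c / (u - s))" by simp
          hence eq2: "ennreal (u - s) * ennreal (c * (u - s) powr (-2)) = ennreal (c / (u - s))"
            by (simp add: mult.commute)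
          have X: "ennreal (u - s) * (indicator {0..e} s * (indicator {0..e} t * ennreal (c * (u - s) powr - 2))) =
             indicator {0..e} s * (indicator {0..e} t * ennreal (c / (u - s)))"
            unfolding eq2[symmetric] by (simp only: ac_simps)
          show ?thesis using True by (simp add: ac_simps X)
        next
          case False thus ?thesis by (auto simp: indicator_def)
        qed
        finally show ?thesis .
      qed
      define f where "f = (\<lambda>y::real. indicator {0<..e} y * ennreal (c / y))"
      have fm[measurable]: "f \<in> borel_measurable borel" unfolding f_def by measurable
      have "(\<integral>\<^sup>+u. \<integral>\<^sup>+v. L (s,t,u,v) \<partial>lborel \<partial>lborel) =
            (\<integral>\<^sup>+u. (indicator {0..e} s * indicator {0..e} t) * f (-s + 1 * u) \<partial>lborel)"
        unfolding v f_def by (simp add: mult.assoc)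
      also have "\<dots> = (indicator {0..e} s * indicator {0..e} t) * (\<integral>\<^sup>+u. f (-s + 1 * u) \<partial>lborel)"
        by (rule nn_integral_cmult) measurable
      also have "(\<integral>\<^sup>+u. f (-s + 1 * u) \<partial>lborel) = (\<integral>\<^sup>+y. f y \<partial>lborel)"
        using nn_integral_real_affine[OF fm, of 1 "-s"] by simp
      also have "\<dots> = \<infinity>" unfolding f_def by (rule ln_integral_div[OF c e(1)])
      finally show ?thesis .
    qed
    have "(\<integral>\<^sup>+x. L x \<partial>lborel) = (\<integral>\<^sup>+s. \<integral>\<^sup>+t. \<integral>\<^sup>+u. \<integral>\<^sup>+v. L (s,t,u,v) \<partial>lborel \<partial>lborel \<partial>lborel \<partial>lborel)"
      by (rule tonelli4[OF Lm])
    also have "\<dots> = (\<integral>\<^sup>+s. \<integral>\<^sup>+t. (indicator {0..e} s * \<infinity>) * indicator {0..e} t \<partial>lborel \<partial>lborel)"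
      unfolding inner by (simp add: ac_simps)
    also have "\<dots> = (\<integral>\<^sup>+s. (\<infinity> * ennreal e) * indicator {0..e} s \<partial>lborel)"
    proof (intro nn_integral_cong)
      fix s :: real
      have "(\<integral>\<^sup>+t. (indicator {0..e} s * \<infinity>) * indicator {0..e} t \<partial>lborel) = (indicator {0..e} s * \<infinity>) * emeasure lborel {0..e}"
        by (rule nn_integral_cmult_indicator) simp
      also have "emeasure lborel {0..e} = ennreal e" using e by simp
      finally show "(\<integral>\<^sup>+t. (indicator {0..e} s * \<infinity>) * indicator {0..e} t \<partial>lborel) = (\<infinity> * ennreal e) * indicator {0..e} s"
        by (simp only: ac_simps)
    qed
    also have "\<dots> = (\<infinity> * ennreal e) * emeasure lborel {0..e}"
      by (rule nn_integral_cmult_indicator) simp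
    also have "\<dots> = \<infinity>" using e by (simp add: ennreal_mult_eq_top_iff)
    finally show ?thesis .
  qed
  ultimately show ?thesis by (simp add: top_unique)
qed

theorem lemma3p3:
  fixes H T :: real and d :: nat
  assumes "0 < H" "H < 1" "d \<ge> 2" "T > 0"
  shows "A_T H d T < \<infinity> \<longleftrightarrow> H * real d < 2"
proof
  assume "A_T H d T < \<infinity>"
  thus "H * real d < 2" using infinite_dir[OF assms(1,2) _ assms(4), of d] by (metis not_less less_irrefl)
next
  assume "H * real d < 2"
  thus "A_T H d T < \<infinity>" using finite_dir[OF assms(1,2) _ assms(4)] by blast
qed

end
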